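(* Fix a point $(\xi^1,\xi^2)$ with a symmetric positive definite matrix $g_{\alpha\beta}$ ($\alpha,\beta\in\{1,2\}$), $g=\det(g_{\alpha\beta})$, inverse $g^{\alpha\beta}$. Let $P=P(\rho,e)$ be a smooth pressure law and consider the state vector $U=(\rho,v^1,v^2,V^3,e)^T$ with $\rho>0$, $E=e+\tfrac12\left(g_{\alpha\beta}v^\alpha v^\beta+(V^3)^2\right)$ and $q_c^2=g_{\alpha\beta}v^\alpha v^\beta$. For $\alpha=1,2$ let $A^\alpha$ be the $5\times5$ Jacobian matrix with respect to $U$ (with $g_{\alpha\beta}$ held fixed) of the flux $$F^\alpha(U)=\Big(\rho\sqrt g\,v^\alpha,\ \sqrt g[\rho v^1v^\alpha+g^{1\alpha}P],\ \sqrt g[\rho v^2v^\alpha+g^{2\alpha}P],\ \rho\sqrt g\,V^3v^\alpha,\ \sqrt g[\rho E+P]v^\alpha\Big)^T.$$ Assume $PP_e+\rho^2P_\rho>0$ and let $c=\frac{\sqrt{PP_e+\rho^2P_\rho}}{\rho}$. At a state where $A^1$ is invertible, the eigenvalues of $\bar A=(A^1)^{-1}A^2$ are $$\frac{v^2}{v^1},\ \frac{v^2}{v^1},\ \frac{v^2}{v^1},\ \frac{v^1v^2-c^2g^{12}\mp\frac{c}{\sqrt g}\sqrt{q_c^2-c^2}}{(v^1)^2-g^{11}c^2}.$$ Consequently the system $A^1U_{\xi^1}+A^2U_{\xi^2}+S=0$ (treating $\xi^1$ as time-like) is never strictly hyperbolic; it is (non-strictly) hyperbolic where $q_c>c$ and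 elliptic where $q_c<c$.
   Context: For a first-order system $U_t+\sum_i\bar A^iU_{x^i}+\bar S=0$, it is called strictly hyperbolic if for every unit vector $w$ the eigenvalues of $\sum_i w_i\bar A^i$ are real and distinct, non-strictly hyperbolic if they are all real but not all distinct, and elliptic if some eigenvalue is complex (non-real). For the steady system $A^1U_{\xi^1}+A^2U_{\xi^2}+S=0$, $\xi^1$ is treated as the time-like variable, so the relevant matrix is $\bar A=(A^1)^{-1}A^2$. $P_\rho,P_e$ denote partial derivatives of the pressure law. These are the steady conical Euler equations projected on the unit sphere, with $v^\alpha$ rescaled crossflow velocity components and $V^3$ the radial velocity. *)

theory Defs
  imports "HOL-Analysis.Analysis"
begin

definition cmat :: "real^'n^'m \<Rightarrow> complex^'n^'m" where
  "cmat M = (\<chi> i j. complex_of_real (M $ i $ j))"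

definition charpoly :: "real^'n^'n \<Rightarrow> complex \<Rightarrow> complex" where
  "charpoly M z = det (mat z - cmat M)"

definition eigenvalues :: "real^'n^'n \<Rightarrow> complex set" where
  "eigenvalues M = {z. charpoly M z = 0}"

text \<open>Eigenvalues counted with algebraic multiplicity are all distinct iff there are
  exactly n of them as a set.\<close>
definition all_real_eigenvalues :: "real^'n^'n \<Rightarrow> bool" where
  "all_real_eigenvalues M \<longleftrightarrow> (\<forall>z\<in>eigenvalues M. Im z = 0)"

definition distinct_eigenvalues :: "real^'n^'n \<Rightarrow> bool" where
  "distinct_eigenvalues M \<longleftrightarrow> card (eigenvalues M) = CARD('n)"

text \<open>Classification of a first order system U_t + Abar U_x + S = 0 with ONE space
  variable: the unit vectors w are w = 1 and w = -1, and the relevant matrix is w * Abar.\<close>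
definition strictly_hyperbolic :: "real^'n^'n \<Rightarrow> bool" where
  "strictly_hyperbolic Abar \<longleftrightarrow>
     (\<forall>w::real. \<bar>w\<bar> = 1 \<longrightarrow> all_real_eigenvalues (w *\<^sub>R Abar) \<and> distinct_eigenvalues (w *\<^sub>R Abar))"

definition nonstrictly_hyperbolic :: "real^'n^'n \<Rightarrow> bool" where
  "nonstrictly_hyperbolic Abar \<longleftrightarrow>
     (\<forall>w::real. \<bar>w\<bar> = 1 \<longrightarrow> all_real_eigenvalues (w *\<^sub>R Abar)) \<and>
     \<not> (\<forall>w::real. \<bar>w\<bar> = 1 \<longrightarrow> distinct_eigenvalues (w *\<^sub>R Abar))"

definition elliptic :: "real^'n^'n \<Rightarrow> bool" where
  "elliptic Abar \<longleftrightarrow> (\<exists>w::real. \<bar>w\<bar> = 1 \<and> \<not> all_real_eigenvalues (w *\<^sub>R Abar))"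

text \<open>State U = (rho, v1, v2, V3, e); indices of real^5 are 1..5, of real^2 are 1,2.
  G = (g_{alpha beta}) is the metric, its inverse (g^{alpha beta}) is matrix_inv G,
  P is the pressure law P(rho, e).\<close>

definition crossvel :: "real^5 \<Rightarrow> real^2" where
  "crossvel U = vector [U$2, U$3]"

definition total_energy :: "real^2^2 \<Rightarrow> real^5 \<Rightarrow> real" where
  "total_energy G U = U$5 + 1/2 * (crossvel U \<bullet> (G *v crossvel U) + (U$4)^2)"

definition flux :: "real^2^2 \<Rightarrow> (real \<Rightarrow> real \<Rightarrow> real) \<Rightarrow> 2 \<Rightarrow> real^5 \<Rightarrow> real^5" where
  "flux G P a U =
    (let rho = U$1; v = crossvel U; V3 = U$4; e = U$5;
         sg = sqrt (det G); gi = matrix_inv G; p = P rho e; E = total_energy G U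
     in vector [rho * sg * v$a,
                sg * (rho * v$1 * v$a + gi$1$a * p),
                sg * (rho * v$2 * v$a + gi$2$a * p),
                rho * sg * V3 * v$a,
                sg * (rho * E + p) * v$a])"

definition fluxjac :: "real^2^2 \<Rightarrow> (real \<Rightarrow> real \<Rightarrow> real) \<Rightarrow> 2 \<Rightarrow> real^5 \<Rightarrow> real^5^5" where
  "fluxjac G P a U = jacobian (flux G P a) (at U)"

end

theory Submission
  imports Defs
begin


lemma exhaust_5:
  fixes x :: 5
  shows "x = 1 \<or> x = 2 \<or> x = 3 \<or> x = 4 \<or> x = 5"
proof (induct x)
  case (of_int z)
  then have "z = 0 \<or> z = 1 \<or> z = 2 \<or> z = 3 \<or> z = 4" by fastforce
  then show ?case by auto
qed

lemma UNIV_5: "UNIV = {1, 2, 3, 4, 5::5}"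
  using exhaust_5 by auto

lemma sum_5: "sum f (UNIV::5 set) = f 1 + f 2 + f 3 + f 4 + f 5"
  unfolding UNIV_5 by (simp add: ac_simps)

lemma vector_5 [simp]:
 "(vector [x1,x2,x3,x4,x5] ::('a::zero)^5)$1 = x1"
 "(vector [x1,x2,x3,x4,x5] ::('a::zero)^5)$2 = x2"
 "(vector [x1,x2,x3,x4,x5] ::('a::zero)^5)$3 = x3"
 "(vector [x1,x2,x3,x4,x5] ::('a::zero)^5)$4 = x4"
 "(vector [x1,x2,x3,x4,x5] ::('a::zero)^5)$5 = x5"
  unfolding vector_def by simp_all

lemma det_4:
  "det (A::'a::comm_ring_1^4^4) = (\<Sum>p\<in>{p. p permutes (UNIV::4 set)}. of_int (sign p) * (\<Prod>i\<in>UNIV. A $ i $ p i))"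
  unfolding det_def by simp

lemma det_5:
  "det (A::'a::comm_ring_1^5^5) =
    A$1$1 * A$2$2 * A$3$3 * A$4$4 * A$5$5
    - A$1$1 * A$2$2 * A$3$3 * A$4$5 * A$5$4
    - A$1$1 * A$2$2 * A$3$4 * A$4$3 * A$5$5
    + A$1$1 * A$2$2 * A$3$4 * A$4$5 * A$5$3
    + A$1$1 * A$2$2 * A$3$5 * A$4$3 * A$5$4
    - A$1$1 * A$2$2 * A$3$5 * A$4$4 * A$5$3
    - A$1$1 * A$2$3 * A$3$2 * A$4$4 * A$5$5
    + A$1$1 * A$2$3 * A$3$2 * A$4$5 * A$5$4
    + A$1$1 * A$2$3 * A$3$4 * A$4$2 * A$5$5
    - A$1$1 * A$2$3 * A$3$4 * A$4$5 * A$5$2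
    - A$1$1 * A$2$3 * A$3$5 * A$4$2 * A$5$4
    + A$1$1 * A$2$3 * A$3$5 * A$4$4 * A$5$2
    + A$1$1 * A$2$4 * A$3$2 * A$4$3 * A$5$5
    - A$1$1 * A$2$4 * A$3$2 * A$4$5 * A$5$3
    - A$1$1 * A$2$4 * A$3$3 * A$4$2 * A$5$5
    + A$1$1 * A$2$4 * A$3$3 * A$4$5 * A$5$2
    + A$1$1 * A$2$4 * A$3$5 * A$4$2 * A$5$3
    - A$1$1 * A$2$4 * A$3$5 * A$4$3 * A$5$2
    - A$1$1 * A$2$5 * A$3$2 * A$4$3 * A$5$4
    + A$1$1 * A$2$5 * A$3$2 * A$4$4 * A$5$3
    + A$1$1 * A$2$5 * A$3$3 * A$4$2 * A$5$4
    - A$1$1 * A$2$5 * A$3$3 * A$4$4 * A$5$2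
    - A$1$1 * A$2$5 * A$3$4 * A$4$2 * A$5$3
    + A$1$1 * A$2$5 * A$3$4 * A$4$3 * A$5$2
    - A$1$2 * A$2$1 * A$3$3 * A$4$4 * A$5$5
    + A$1$2 * A$2$1 * A$3$3 * A$4$5 * A$5$4
    + A$1$2 * A$2$1 * A$3$4 * A$4$3 * A$5$5
    - A$1$2 * A$2$1 * A$3$4 * A$4$5 * A$5$3
    - A$1$2 * A$2$1 * A$3$5 * A$4$3 * A$5$4
    + A$1$2 * A$2$1 * A$3$5 * A$4$4 * A$5$3
    + A$1$2 * A$2$3 * A$3$1 * A$4$4 * A$5$5
    - A$1$2 * A$2$3 * A$3$1 * A$4$5 * A$5$4
    - A$1$2 * A$2$3 * A$3$4 * A$4$1 * A$5$5
    + A$1$2 * A$2$3 * A$3$4 * A$4$5 * A$5$1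
    + A$1$2 * A$2$3 * A$3$5 * A$4$1 * A$5$4
    - A$1$2 * A$2$3 * A$3$5 * A$4$4 * A$5$1
    - A$1$2 * A$2$4 * A$3$1 * A$4$3 * A$5$5
    + A$1$2 * A$2$4 * A$3$1 * A$4$5 * A$5$3
    + A$1$2 * A$2$4 * A$3$3 * A$4$1 * A$5$5
    - A$1$2 * A$2$4 * A$3$3 * A$4$5 * A$5$1
    - A$1$2 * A$2$4 * A$3$5 * A$4$1 * A$5$3
    + A$1$2 * A$2$4 * A$3$5 * A$4$3 * A$5$1
    + A$1$2 * A$2$5 * A$3$1 * A$4$3 * A$5$4
    - A$1$2 * A$2$5 * A$3$1 * A$4$4 * A$5$3
    - A$1$2 * A$2$5 * A$3$3 * A$4$1 * A$5$4
    + A$1$2 * A$2$5 * A$3$3 * A$4$4 * A$5$1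
    + A$1$2 * A$2$5 * A$3$4 * A$4$1 * A$5$3
    - A$1$2 * A$2$5 * A$3$4 * A$4$3 * A$5$1
    + A$1$3 * A$2$1 * A$3$2 * A$4$4 * A$5$5
    - A$1$3 * A$2$1 * A$3$2 * A$4$5 * A$5$4
    - A$1$3 * A$2$1 * A$3$4 * A$4$2 * A$5$5
    + A$1$3 * A$2$1 * A$3$4 * A$4$5 * A$5$2
    + A$1$3 * A$2$1 * A$3$5 * A$4$2 * A$5$4
    - A$1$3 * A$2$1 * A$3$5 * A$4$4 * A$5$2
    - A$1$3 * A$2$2 * A$3$1 * A$4$4 * A$5$5
    + A$1$3 * A$2$2 * A$3$1 * A$4$5 * A$5$4
    + A$1$3 * A$2$2 * A$3$4 * A$4$1 * A$5$5
    - A$1$3 * A$2$2 * A$3$4 * A$4$5 * A$5$1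
    - A$1$3 * A$2$2 * A$3$5 * A$4$1 * A$5$4
    + A$1$3 * A$2$2 * A$3$5 * A$4$4 * A$5$1
    + A$1$3 * A$2$4 * A$3$1 * A$4$2 * A$5$5
    - A$1$3 * A$2$4 * A$3$1 * A$4$5 * A$5$2
    - A$1$3 * A$2$4 * A$3$2 * A$4$1 * A$5$5
    + A$1$3 * A$2$4 * A$3$2 * A$4$5 * A$5$1
    + A$1$3 * A$2$4 * A$3$5 * A$4$1 * A$5$2
    - A$1$3 * A$2$4 * A$3$5 * A$4$2 * A$5$1
    - A$1$3 * A$2$5 * A$3$1 * A$4$2 * A$5$4
    + A$1$3 * A$2$5 * A$3$1 * A$4$4 * A$5$2
    + A$1$3 * A$2$5 * A$3$2 * A$4$1 * A$5$4
    - A$1$3 * A$2$5 * A$3$2 * A$4$4 * A$5$1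
    - A$1$3 * A$2$5 * A$3$4 * A$4$1 * A$5$2
    + A$1$3 * A$2$5 * A$3$4 * A$4$2 * A$5$1
    - A$1$4 * A$2$1 * A$3$2 * A$4$3 * A$5$5
    + A$1$4 * A$2$1 * A$3$2 * A$4$5 * A$5$3
    + A$1$4 * A$2$1 * A$3$3 * A$4$2 * A$5$5
    - A$1$4 * A$2$1 * A$3$3 * A$4$5 * A$5$2
    - A$1$4 * A$2$1 * A$3$5 * A$4$2 * A$5$3
    + A$1$4 * A$2$1 * A$3$5 * A$4$3 * A$5$2
    + A$1$4 * A$2$2 * A$3$1 * A$4$3 * A$5$5
    - A$1$4 * A$2$2 * A$3$1 * A$4$5 * A$5$3
    - A$1$4 * A$2$2 * A$3$3 * A$4$1 * A$5$5
    + A$1$4 * A$2$2 * A$3$3 * A$4$5 * A$5$1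
    + A$1$4 * A$2$2 * A$3$5 * A$4$1 * A$5$3
    - A$1$4 * A$2$2 * A$3$5 * A$4$3 * A$5$1
    - A$1$4 * A$2$3 * A$3$1 * A$4$2 * A$5$5
    + A$1$4 * A$2$3 * A$3$1 * A$4$5 * A$5$2
    + A$1$4 * A$2$3 * A$3$2 * A$4$1 * A$5$5
    - A$1$4 * A$2$3 * A$3$2 * A$4$5 * A$5$1
    - A$1$4 * A$2$3 * A$3$5 * A$4$1 * A$5$2
    + A$1$4 * A$2$3 * A$3$5 * A$4$2 * A$5$1
    + A$1$4 * A$2$5 * A$3$1 * A$4$2 * A$5$3
    - A$1$4 * A$2$5 * A$3$1 * A$4$3 * A$5$2
    - A$1$4 * A$2$5 * A$3$2 * A$4$1 * A$5$3
    + A$1$4 * A$2$5 * A$3$2 * A$4$3 * A$5$1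
    + A$1$4 * A$2$5 * A$3$3 * A$4$1 * A$5$2
    - A$1$4 * A$2$5 * A$3$3 * A$4$2 * A$5$1
    + A$1$5 * A$2$1 * A$3$2 * A$4$3 * A$5$4
    - A$1$5 * A$2$1 * A$3$2 * A$4$4 * A$5$3
    - A$1$5 * A$2$1 * A$3$3 * A$4$2 * A$5$4
    + A$1$5 * A$2$1 * A$3$3 * A$4$4 * A$5$2
    + A$1$5 * A$2$1 * A$3$4 * A$4$2 * A$5$3
    - A$1$5 * A$2$1 * A$3$4 * A$4$3 * A$5$2
    - A$1$5 * A$2$2 * A$3$1 * A$4$3 * A$5$4
    + A$1$5 * A$2$2 * A$3$1 * A$4$4 * A$5$3
    + A$1$5 * A$2$2 * A$3$3 * A$4$1 * A$5$4
    - A$1$5 * A$2$2 * A$3$3 * A$4$4 * A$5$1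
    - A$1$5 * A$2$2 * A$3$4 * A$4$1 * A$5$3
    + A$1$5 * A$2$2 * A$3$4 * A$4$3 * A$5$1
    + A$1$5 * A$2$3 * A$3$1 * A$4$2 * A$5$4
    - A$1$5 * A$2$3 * A$3$1 * A$4$4 * A$5$2
    - A$1$5 * A$2$3 * A$3$2 * A$4$1 * A$5$4
    + A$1$5 * A$2$3 * A$3$2 * A$4$4 * A$5$1
    + A$1$5 * A$2$3 * A$3$4 * A$4$1 * A$5$2
    - A$1$5 * A$2$3 * A$3$4 * A$4$2 * A$5$1
    - A$1$5 * A$2$4 * A$3$1 * A$4$2 * A$5$3
    + A$1$5 * A$2$4 * A$3$1 * A$4$3 * A$5$2
    + A$1$5 * A$2$4 * A$3$2 * A$4$1 * A$5$3
    - A$1$5 * A$2$4 * A$3$2 * A$4$3 * A$5$1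
    - A$1$5 * A$2$4 * A$3$3 * A$4$1 * A$5$2
    + A$1$5 * A$2$4 * A$3$3 * A$4$2 * A$5$1"
proof -
  have f1: "finite {2::5, 3, 4, 5}" "1 \<notin> {2::5, 3, 4, 5}" by auto
  have f2: "finite {3::5, 4, 5}" "2 \<notin> {3::5, 4, 5}" by auto
  have f3: "finite {4::5, 5}" "3 \<notin> {4::5, 5}" by auto
  have f4: "finite {5::5}" "4 \<notin> {5::5}" by auto
  show ?thesis
    unfolding det_def UNIV_5
    unfolding sum_over_permutations_insert[OF f1]
    unfolding sum_over_permutations_insert[OF f2]
    unfolding sum_over_permutations_insert[OF f3]
    unfolding sum_over_permutations_insert[OF f4]
    unfolding permutes_sing
    by (simp add: sign_swap_id permutation_swap_id sign_compose permutation_compose permutation_id sign_id swap_id_eq algebra_simps)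
qed

definition Jm :: "'a::comm_ring_1 \<Rightarrow> 'a \<Rightarrow> 'a \<Rightarrow> 'a \<Rightarrow> 'a \<Rightarrow> 'a \<Rightarrow> 'a \<Rightarrow> 'a \<Rightarrow> 'a \<Rightarrow> 'a \<Rightarrow> 'a \<Rightarrow> 'a \<Rightarrow> 'a \<Rightarrow> 'a \<Rightarrow> 'a \<Rightarrow> 'a \<Rightarrow> 'a^5^5" where
  "Jm r x y V E p pr pe s h1 h2 w1 w2 va d1 d2 = vector [
     vector [s * va, s * (r * d1), s * (r * d2), 0, 0],
     vector [s * (x * va + h1 * pr), s * (r * va + r * x * d1), s * (r * x * d2), 0, s * (h1 * pe)],
     vector [s * (y * va + h2 * pr), s * (r * y * d1), s * (r * va + r * y * d2), 0, s * (h2 * pe)],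
     vector [s * (V * va), s * (r * V * d1), s * (r * V * d2), s * (r * va), 0],
     vector [s * ((E+pr) * va), s * (r * w1 * va + (r * E+p) * d1), s * (r * w2 * va + (r * E+p) * d2), s * (r * V * va), s * ((r+pe) * va)]]"

lemma det_Jm:
  fixes r x y V E p pr pe s h1 h2 w1 w2 va d1 d2 :: "'a::comm_ring_1"
  assumes hyp: "w1 * h1 + w2 * h2 = va"
  shows "det (Jm r x y V E p pr pe s h1 h2 w1 w2 va d1 d2) =
     s^5 * r^2 * va^3 * (r^2 * va^2 - (p * pe + r^2 * pr) * (d1 * h1 + d2 * h2))"
proof -
  define L :: "'a^5^5" where "L = vector [
     vector [1, 0, 0, 0, 0], vector [x, 1, 0, 0, 0], vector [y, 0, 1, 0, 0],
     vector [V, 0, 0, 1, 0], vector [E, w1, w2, V, 1]]"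
  define M :: "'a^5^5" where "M = vector [
     vector [s * va, s * (r * d1), s * (r * d2), 0, 0],
     vector [s * (h1 * pr), s * (r * va), 0, 0, s * (h1 * pe)],
     vector [s * (h2 * pr), 0, s * (r * va), 0, s * (h2 * pe)],
     vector [0, 0, 0, s * (r * va), 0],
     vector [0, s * (p * d1), s * (p * d2), 0, s * (r * va)]]"
  have e1: "s * ((E+pr) * va) = E * (s * va) + w1 * (s * (h1 * pr)) + w2 * (s * (h2 * pr))"
    using hyp by (simp add: algebra_simps flip: hyp)
  have e2: "s * ((r+pe) * va) = w1 * (s * (h1 * pe)) + w2 * (s * (h2 * pe)) + s * (r * va)"
    using hyp by (simp add: algebra_simps flip: hyp)
  have LM: "Jm r x y V E p pr pe s h1 h2 w1 w2 va d1 d2 = L ** M"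
    unfolding vec_eq_iff matrix_matrix_mult_def Jm_def L_def M_def
    apply (intro allI)
    subgoal for i j
      using exhaust_5[of i] exhaust_5[of j]
      apply (elim disjE)
      by (simp_all add: sum_5 e1 e2, (simp_all add: algebra_simps)?)
    done
  have dL: "det L = 1"
    unfolding det_5 L_def by simp
  have dM: "det M = s^5 * r^2 * va^3 * (r^2 * va^2 - (p * pe + r^2 * pr) * (d1 * h1 + d2 * h2))"
    unfolding det_5 M_def by (simp add: eval_nat_numeral algebra_simps)
  show ?thesis using LM dL dM by (simp add: det_mul)
qed



lemma crossvel_nth: "crossvel U $ a = (if a = 1 then 1 else 0) * U$2 + (if a = 2 then 1 else 0) * U$3"
  using exhaust_2[of a] by (auto simp: crossvel_def)

lemma total_energy_eq: "total_energy G U = U$5 + 1/2 * (G$1$1 * U$2 * U$2 + G$1$2 * U$2 * U$3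
   + G$2$1 * U$3 * U$2 + G$2$2 * U$3 * U$3 + U$4 * U$4)"
  by (simp add: total_energy_def crossvel_def inner_vec_def sum_2 matrix_vector_mult_def power2_eq_square algebra_simps)

lemma nth_deriv: "((\<lambda>x::real^'n. x $ i) has_derivative (\<lambda>h. h $ i)) F"
  by (rule bounded_linear_imp_has_derivative) (rule bounded_linear_vec_nth)

lemma flux_deriv:
  fixes G :: "real^2^2" and P Pr Pe :: "real \<Rightarrow> real \<Rightarrow> real" and U :: "real^5" and a :: 2
  assumes Pd: "((\<lambda>x. P (fst x) (snd x)) has_derivative (\<lambda>h. Pr (U$1) (U$5) * fst h + Pe (U$1) (U$5) * snd h)) (at (U$1, U$5))"
  shows "(flux G P a has_derivative (\<lambda>h. Jm (U$1) (U$2) (U$3) (U$4) (total_energy G U) (P (U$1) (U$5))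
      (Pr (U$1) (U$5)) (Pe (U$1) (U$5)) (sqrt (det G)) (matrix_inv G $ 1 $ a) (matrix_inv G $ 2 $ a)
      (G$1$1 * U$2 + (G$1$2 + G$2$1) / 2 * U$3) ((G$1$2 + G$2$1) / 2 * U$2 + G$2$2 * U$3)
      (crossvel U $ a) (if a = 1 then 1 else 0) (if a = 2 then 1 else 0) *v h)) (at U)"
proof -
  define d1 :: real where "d1 = (if a = 1 then 1 else 0)"
  define d2 :: real where "d2 = (if a = 2 then 1 else 0)"
  define sg where "sg = sqrt (det G)"
  define h1 where "h1 = matrix_inv G $ 1 $ a"
  define h2 where "h2 = matrix_inv G $ 2 $ a"
  define TE where "TE = (\<lambda>U::real^5. U$5 + 1/2 * (G$1$1 * U$2 * U$2 + G$1$2 * U$2 * U$3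
     + G$2$1 * U$3 * U$2 + G$2$2 * U$3 * U$3 + U$4 * U$4))"
  define PP where "PP = (\<lambda>U::real^5. P (U$1) (U$5))"
  have PPd: "(PP has_derivative (\<lambda>h. Pr (U$1) (U$5) * h$1 + Pe (U$1) (U$5) * h$5)) (at U)"
  proof -
    have "((\<lambda>x. P (fst x) (snd x)) \<circ> (\<lambda>U::real^5. (U$1, U$5)) has_derivative
        (\<lambda>h. Pr (U$1) (U$5) * fst h + Pe (U$1) (U$5) * snd h) \<circ> (\<lambda>h::real^5. (h$1, h$5))) (at U)"
      by (rule diff_chain_at) (auto intro!: derivative_eq_intros bounded_linear_imp_has_derivative bounded_linear_Pair bounded_linear_vec_nth simp: Pd)
    then show ?thesis by (simp add: PP_def o_def)
  qed
  have fl: "flux G P a = (\<lambda>U. (U$1 * sg * (d1 * U$2 + d2 * U$3)) *\<^sub>R axis 1 1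
      + (sg * (U$1 * U$2 * (d1 * U$2 + d2 * U$3) + h1 * PP U)) *\<^sub>R axis 2 1
      + (sg * (U$1 * U$3 * (d1 * U$2 + d2 * U$3) + h2 * PP U)) *\<^sub>R axis 3 1
      + (U$1 * sg * U$4 * (d1 * U$2 + d2 * U$3)) *\<^sub>R axis 4 1
      + (sg * (U$1 * TE U + PP U) * (d1 * U$2 + d2 * U$3)) *\<^sub>R axis 5 (1::real))"
    apply (rule ext)
    subgoal for U
      unfolding vec_eq_iff
      apply (intro allI)
      subgoal for i
        using exhaust_5[of i]
        apply (elim disjE)
        apply (simp_all add: flux_def Let_def crossvel_nth total_energy_eq
           TE_def PP_def sg_def h1_def h2_def d1_def d2_def axis_def)
        done
      done
    done
  show ?thesis
    unfolding fl
    unfolding TE_def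
    apply (rule derivative_eq_intros refl PPd nth_deriv)+
    apply (rule ext)
    subgoal for h
      unfolding vec_eq_iff
      apply (intro allI)
      subgoal for i
        using exhaust_5[of i]
        apply (elim disjE)
        apply (simp_all add: Jm_def matrix_vector_mult_def sum_5 axis_def crossvel_nth total_energy_eq
           PP_def sg_def h1_def h2_def d1_def d2_def)
        apply (simp_all add: algebra_simps add_divide_distrib[symmetric])
        done
      done
    done
qed



lemma cmat_mult: "cmat (X ** Y) = cmat X ** cmat Y"
  by (simp add: cmat_def matrix_matrix_mult_def vec_eq_iff)

lemma det_cmat: "det (cmat X) = complex_of_real (det X)"
  by (simp add: det_def cmat_def)

lemma cmat_mat1: "cmat (mat 1) = mat 1"
  by (simp add: cmat_def mat_def vec_eq_iff)

lemma cmat_neg: "cmat (-X) = - cmat X"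
  by (simp add: cmat_def vec_eq_iff)

lemma det_neg5: "det (- (X::complex^5^5)) = - det X"
proof -
  have "(\<chi> i. (-1::complex) *s X $ i) = - X"
    by (simp add: vec_eq_iff)
  then show ?thesis
    using det_rows_mul[of "\<lambda>_. (-1::complex)" "\<lambda>i. X $ i"] by simp
qed

lemma inv_2:
  fixes G :: "real^2^2"
  assumes "det G \<noteq> 0"
  shows "matrix_inv G = vector [vector [G$2$2 / det G, - G$1$2 / det G], vector [- G$2$1 / det G, G$1$1 / det G]]"
proof -
  define H :: "real^2^2" where "H = vector [vector [G$2$2 / det G, - G$1$2 / det G], vector [- G$2$1 / det G, G$1$1 / det G]]"
  have GH: "G ** H = mat 1" and HG: "H ** G = mat 1"
    unfolding vec_eq_iff matrix_matrix_mult_def sum_2 mat_def H_def forall_2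
    using assms by (simp_all add: det_2 add_divide_distrib[symmetric] diff_divide_distrib[symmetric] algebra_simps)
  have "\<exists>A'. G ** A' = mat 1 \<and> A' ** G = mat 1" using GH HG by blast
  then have X: "G ** matrix_inv G = mat 1 \<and> matrix_inv G ** G = mat 1"
    unfolding matrix_inv_def by (rule someI_ex)
  have "matrix_inv G = matrix_inv G ** (G ** H)" by (simp add: GH)
  also have "\<dots> = H" using X by (simp add: matrix_mul_assoc)
  finally show ?thesis by (simp add: H_def)
qed



theorem mainTheorem3:
  fixes G :: "real^2^2" and P Pr Pe :: "real \<Rightarrow> real \<Rightarrow> real" and U :: "real^5"
  assumes G_sym: "transpose G = G"
    and G_pos: "\<forall>x::real^2. x \<noteq> 0 \<longrightarrow> x \<bullet> (G *v x) > 0"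
    and P_diff: "\<forall>r s. r > 0 \<longrightarrow>
         ((\<lambda>x. P (fst x) (snd x)) has_derivative (\<lambda>h. Pr r s * fst h + Pe r s * snd h)) (at (r, s))"
    and rho_pos: "U$1 > 0"
    and sound: "P (U$1) (U$5) * Pe (U$1) (U$5) + (U$1)^2 * Pr (U$1) (U$5) > 0"
    and inv: "invertible (fluxjac G P 1 U)"
  shows
    "let rho = U$1; v1 = U$2; v2 = U$3; e = U$5;
         g = det G; gi = matrix_inv G;
         qc = sqrt (crossvel U \<bullet> (G *v crossvel U));
         c = sqrt (P rho e * Pe rho e + rho^2 * Pr rho e) / rho;
         Abar = matrix_inv (fluxjac G P 1 U) ** fluxjac G P 2 U;
         lam0 = complex_of_real (v2 / v1);
         lamm = (complex_of_real (v1 * v2 - c^2 * gi$1$2)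
                  - complex_of_real (c / sqrt g) * csqrt (complex_of_real (qc^2 - c^2)))
                / complex_of_real (v1^2 - gi$1$1 * c^2);
         lamp = (complex_of_real (v1 * v2 - c^2 * gi$1$2)
                  + complex_of_real (c / sqrt g) * csqrt (complex_of_real (qc^2 - c^2)))
                / complex_of_real (v1^2 - gi$1$1 * c^2)
     in (\<forall>z. charpoly Abar z = (z - lam0)^3 * (z - lamm) * (z - lamp))
        \<and> \<not> strictly_hyperbolic Abar
        \<and> (qc > c \<longrightarrow> nonstrictly_hyperbolic Abar)
        \<and> (qc < c \<longrightarrow> elliptic Abar)"
proof -
  define r where "r = U$1"
  define x where "x = U$2"
  define y where "y = U$3"
  define e where "e = U$5"
  define p where "p = P r e"
  define pr where "pr = Pr r e"
  define pe where "pe = Pe r e"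
  define g where "g = det G"
  define s where "s = sqrt g"
  define g11 where "g11 = G$1$1"
  define g12 where "g12 = G$1$2"
  define g22 where "g22 = G$2$2"
  define K where "K = p * pe + r^2 * pr"
  define c where "c = sqrt K / r"
  define q2 where "q2 = crossvel U \<bullet> (G *v crossvel U)"
  define qc where "qc = sqrt q2"
  have r_pos: "r > 0" using rho_pos r_def by simp
  have K_pos: "K > 0" using sound by (simp add: K_def p_def pe_def pr_def r_def e_def)
  have c_pos: "c > 0" using K_pos r_pos by (simp add: c_def)
  have c2: "r^2 * c^2 = K" using K_pos r_pos by (simp add: c_def power_divide)
  have g21: "G$2$1 = g12"
  proof -
    have "transpose G $ 2 $ 1 = G $ 2 $ 1" using G_sym by simp
    then show ?thesis by (simp add: transpose_def g12_def)
  qed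
  have gdet: "g = g11 * g22 - g12^2"
    by (simp add: g_def det_2 g11_def g22_def g21 g12_def power2_eq_square)
  have q2_eq: "q2 = g11 * x^2 + 2 * g12 * x * y + g22 * y^2"
    by (simp add: q2_def crossvel_def inner_vec_def sum_2 matrix_vector_mult_def g11_def g12_def g22_def g21 x_def y_def power2_eq_square algebra_simps)
  have g11_pos: "g11 > 0"
  proof -
    have "(vector [1, 0] :: real^2) \<noteq> 0"
    proof
      assume "vector [1, 0] = (0::real^2)"
      then have "(vector [1, 0]::real^2) $ 1 = (0::real^2) $ 1" by (rule arg_cong)
      then show False by simp
    qed
    then have "vector [1, 0] \<bullet> (G *v vector [1, 0]) > 0" using G_pos by blast
    then show ?thesis by (simp add: inner_vec_def sum_2 matrix_vector_mult_def g11_def)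
  qed
  have g_pos: "g > 0"
  proof -
    have "(vector [g12, - g11] :: real^2) \<noteq> 0"
    proof
      assume "vector [g12, - g11] = (0::real^2)"
      then have "(vector [g12, - g11]::real^2) $ 2 = (0::real^2) $ 2" by (rule arg_cong)
      then show False using g11_pos by simp
    qed
    then have "vector [g12, - g11] \<bullet> (G *v vector [g12, - g11]) > 0" using G_pos by blast
    then have "g12 * (g11 * g12 + g12 * (- g11)) + (- g11) * (g12 * g12 + g22 * (- g11)) > 0"
      by (simp add: inner_vec_def sum_2 matrix_vector_mult_def g11_def g12_def g22_def g21)
    then have "g11 * g > 0" by (simp add: gdet power2_eq_square algebra_simps)
    then show ?thesis using g11_pos zero_less_mult_pos by blast
  qed
  define h11 where "h11 = g22 / g"
  define h12 where "h12 = - g12 / g"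
  define h22 where "h22 = g11 / g"
  have gi: "matrix_inv G $ 1 $ 1 = h11" "matrix_inv G $ 1 $ 2 = h12"
     "matrix_inv G $ 2 $ 1 = h12" "matrix_inv G $ 2 $ 2 = h22"
    using inv_2[of G] g_pos by (simp_all add: g_def h11_def h12_def h22_def g11_def g12_def g22_def g21)
  define V where "V = U$4"
  define E where "E = total_energy G U"
  define w1 where "w1 = G$1$1 * U$2 + (G$1$2 + G$2$1) / 2 * U$3"
  define w2 where "w2 = (G$1$2 + G$2$1) / 2 * U$2 + G$2$2 * U$3"
  have w1e: "w1 = g11 * x + g12 * y" by (simp add: w1_def g11_def g12_def g21 x_def y_def)
  have w2e: "w2 = g12 * x + g22 * y" by (simp add: w2_def g22_def g12_def g21 x_def y_def)
  have R1: "w1 * h11 + w2 * h12 = x"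
  proof -
    have "w1 * h11 + w2 * h12 = x * (g11 * g22 - g12^2) / g"
      using g_pos by (simp add: w1e w2e h11_def h12_def field_simps power2_eq_square)
    then show ?thesis using g_pos gdet by simp
  qed
  have R2: "w1 * h12 + w2 * h22 = y"
  proof -
    have "w1 * h12 + w2 * h22 = y * (g11 * g22 - g12^2) / g"
      using g_pos by (simp add: w1e w2e h22_def h12_def field_simps power2_eq_square)
    then show ?thesis using g_pos gdet by simp
  qed
  have Pd: "((\<lambda>x. P (fst x) (snd x)) has_derivative (\<lambda>h. Pr (U$1) (U$5) * fst h + Pe (U$1) (U$5) * snd h)) (at (U$1, U$5))"
    using P_diff rho_pos by blast
  have jac: "fluxjac G P a U = Jm (U$1) (U$2) (U$3) (U$4) (total_energy G U) (P (U$1) (U$5))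
      (Pr (U$1) (U$5)) (Pe (U$1) (U$5)) (sqrt (det G)) (matrix_inv G $ 1 $ a) (matrix_inv G $ 2 $ a)
      (G$1$1 * U$2 + (G$1$2 + G$2$1) / 2 * U$3) ((G$1$2 + G$2$1) / 2 * U$2 + G$2$2 * U$3)
      (crossvel U $ a) (if a = 1 then 1 else 0) (if a = 2 then 1 else 0)" for a
    unfolding fluxjac_def jacobian_def
    using frechet_derivative_at[OF flux_deriv[where U=U and P=P and Pr=Pr and Pe=Pe and G=G and a=a, OF Pd]] by (metis matrix_of_matrix_vector_mul)
  define A1 where "A1 = fluxjac G P 1 U"
  define A2 where "A2 = fluxjac G P 2 U"
  have A1e: "A1 = Jm r x y V E p pr pe s h11 h12 w1 w2 x 1 0"
    using jac[of 1] by (simp add: A1_def gi r_def x_def y_def V_def E_def p_def pr_def pe_def e_def s_def g_def w1_def w2_def crossvel_def)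
  have A2e: "A2 = Jm r x y V E p pr pe s h12 h22 w1 w2 y 0 1"
    using jac[of 2] by (simp add: A2_def gi r_def x_def y_def V_def E_def p_def pr_def pe_def e_def s_def g_def w1_def w2_def crossvel_def)
  have detA1: "det A1 = s^5 * r^2 * x^3 * (r^2 * x^2 - K * h11)"
    unfolding A1e by (subst det_Jm) (simp_all add: R1 K_def)
  have detA1_nz: "det A1 \<noteq> 0" using inv invertible_det_nz A1_def by blast
  have s_pos: "s > 0" using g_pos s_def by simp
  have x_nz: "x \<noteq> 0" and D0: "r^2 * x^2 - K * h11 \<noteq> 0" using detA1_nz detA1 by auto
  define D where "D = x^2 - h11 * c^2"
  have rD: "r^2 * x^2 - K * h11 = r^2 * D" by (simp add: D_def c2[symmetric] algebra_simps)
  have D_nz: "D \<noteq> 0" using D0 rD by auto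
  define B where "B = matrix_inv A1"
  have "\<exists>A'. A1 ** A' = mat 1 \<and> A' ** A1 = mat 1" using inv A1_def invertible_def by blast
  then have BA1: "A1 ** B = mat 1 \<and> B ** A1 = mat 1"
    unfolding B_def matrix_inv_def by (rule someI_ex)
  define Nz where "Nz = (\<lambda>z. (\<chi> i j. z * cmat A1 $ i $ j - cmat A2 $ i $ j) :: complex^5^5)"
  have cp1: "charpoly (B ** A2) z = det (Nz z) / complex_of_real (det A1)" for z
  proof -
    have BA1c: "cmat B ** cmat A1 = mat 1" by (simp add: cmat_mult[symmetric] BA1 cmat_mat1)
    have e1: "(cmat B ** Nz z) $ i $ j = z * (cmat B ** cmat A1) $ i $ j - (cmat B ** cmat A2) $ i $ j" for i j
      by (simp add: matrix_matrix_mult_def Nz_def right_diff_distrib sum_subtractf sum_distrib_left mult.left_commute)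
    have "mat z - cmat (B ** A2) = cmat B ** Nz z"
      unfolding vec_eq_iff using e1 by (simp add: BA1c cmat_mult mat_def)
    then have "charpoly (B ** A2) z = det (cmat B) * det (Nz z)"
      by (simp add: charpoly_def det_mul)
    moreover have "det (cmat B) * complex_of_real (det A1) = 1"
    proof -
      have "det B * det A1 = 1" using BA1 det_mul[of B A1] by simp
      then show ?thesis by (simp add: det_cmat flip: of_real_mult)
    qed
    ultimately show ?thesis using detA1_nz by (simp add: field_simps)
  qed
  define cr where "cr = (complex_of_real :: real \<Rightarrow> complex)"
  have NzJ: "Nz z = Jm (cr r) (cr x) (cr y) (cr V) (cr E) (cr p) (cr pr) (cr pe) (cr s)
     (z * cr h11 - cr h12) (z * cr h12 - cr h22) (cr w1) (cr w2) (z * cr x - cr y) z (-1)" for z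
    unfolding vec_eq_iff
  proof (intro allI)
    fix i j :: 5
    show "Nz z $ i $ j = Jm (cr r) (cr x) (cr y) (cr V) (cr E) (cr p) (cr pr) (cr pe) (cr s)
     (z * cr h11 - cr h12) (z * cr h12 - cr h22) (cr w1) (cr w2) (z * cr x - cr y) z (-1) $ i $ j"
      using exhaust_5[of i] exhaust_5[of j]
      apply (elim disjE)
      apply (simp_all add: Nz_def A1e A2e cmat_def Jm_def cr_def)
      apply (simp_all add: algebra_simps)
      done
  qed
  have hypc: "cr w1 * (z * cr h11 - cr h12) + cr w2 * (z * cr h12 - cr h22) = z * cr x - cr y" for z
  proof -
    have "cr w1 * cr h11 + cr w2 * cr h12 = cr x" "cr w1 * cr h12 + cr w2 * cr h22 = cr y"
      using R1 R2 by (simp_all add: cr_def flip: of_real_mult of_real_add)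
    moreover have "cr w1 * (z * cr h11 - cr h12) + cr w2 * (z * cr h12 - cr h22) =
       z * (cr w1 * cr h11 + cr w2 * cr h12) - (cr w1 * cr h12 + cr w2 * cr h22)"
      by (simp add: algebra_simps)
    ultimately show ?thesis by simp
  qed
  define m where "m = (\<lambda>z. z * (z * cr h11 - cr h12) + (-1) * (z * cr h12 - cr h22))"
  have detNz: "det (Nz z) = cr s^5 * cr r^2 * (z * cr x - cr y)^3 * (cr r^2 * (z * cr x - cr y)^2 - cr K * m z)" for z
    unfolding NzJ m_def by (subst det_Jm[OF hypc]) (simp add: cr_def K_def)
  have q2_nn: "q2 \<ge> 0"
  proof (cases "crossvel U = 0")
    case True then show ?thesis by (simp add: q2_def)
  next
    case False then show ?thesis using G_pos q2_def by (simp add: less_imp_le)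
  qed
  have qc2: "qc^2 = q2" using q2_nn by (simp add: qc_def)
  define b where "b = x * y - c^2 * h12"
  define Y where "Y = y^2 - c^2 * h22"
  have hq: "h22 * x^2 - 2 * h12 * x * y + h11 * y^2 = q2 / g"
    using g_pos by (simp add: q2_eq h11_def h12_def h22_def field_simps power2_eq_square)
  have hdet: "h11 * h22 - h12^2 = 1 / g"
  proof -
    have "h11 * h22 - h12^2 = (g11 * g22 - g12^2) / g^2"
      using g_pos by (simp add: h11_def h12_def h22_def field_simps power2_eq_square)
    then show ?thesis using gdet g_pos by (simp add: power2_eq_square)
  qed
  have keyr: "b^2 - c^2 / g * (q2 - c^2) = D * Y"
  proof -
    have "b^2 - D * Y = c^2 * (h22 * x^2 - 2 * h12 * x * y + h11 * y^2) - c^2 * c^2 * (h11 * h22 - h12^2)"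
      by (simp add: b_def D_def Y_def algebra_simps power2_eq_square)
    then have "b^2 - D * Y = c^2 * (q2 / g) - c^2 * c^2 * (1 / g)" unfolding hq hdet .
    then show ?thesis using g_pos by (simp add: field_simps)
  qed
  define R where "R = cr (c / sqrt g) * csqrt (cr (qc^2 - c^2))"
  have R2: "R^2 = cr (c^2 / g * (q2 - c^2))"
  proof -
    have a2: "(c / sqrt g)^2 = c^2 / g" using g_pos by (simp add: power_divide)
    have "R^2 = (cr (c / sqrt g))^2 * (csqrt (cr (qc^2 - c^2)))^2" by (simp add: R_def power_mult_distrib)
    also have "\<dots> = cr ((c / sqrt g)^2) * cr (q2 - c^2)" by (simp add: cr_def qc2 of_real_power)
    also have "\<dots> = cr (c^2 / g * (q2 - c^2))" by (simp add: a2 cr_def)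
    finally show ?thesis .
  qed
  define lm where "lm = (cr b - R) / cr D"
  define lp where "lp = (cr b + R) / cr D"
  define l0 where "l0 = cr (y / x)"
  have cD: "cr D \<noteq> 0" using D_nz by (simp add: cr_def)
  have cx: "cr x \<noteq> 0" using x_nz by (simp add: cr_def)
  have quad: "(z - lm) * (z - lp) = (cr D * z^2 - 2 * cr b * z + cr Y) / cr D" for z
  proof -
    have "cr b ^ 2 - R^2 = cr (b^2 - c^2 / g * (q2 - c^2))" unfolding R2 cr_def by (simp only: of_real_diff of_real_power)
    also have "\<dots> = cr D * cr Y" unfolding keyr cr_def by simp
    finally have "cr b ^ 2 - R^2 = cr D * cr Y" .
    then show ?thesis using cD unfolding lm_def lp_def by (simp add: field_simps power2_eq_square)
  qed
  have Qz: "cr r^2 * (z * cr x - cr y)^2 - cr K * m z = cr r^2 * (cr D * z^2 - 2 * cr b * z + cr Y)" for z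
  proof -
    have "cr K = cr r^2 * cr c^2" using c2 by (simp add: cr_def flip: of_real_power of_real_mult)
    then show ?thesis by (simp add: m_def D_def b_def Y_def cr_def algebra_simps power2_eq_square)
  qed
  have cpf: "charpoly (B ** A2) z = (z - l0)^3 * (z - lm) * (z - lp)" for z
  proof -
    define u where "u = z * cr x - cr y"
    define Qp where "Qp = cr D * z^2 - 2 * cr b * z + cr Y"
    have dA: "complex_of_real (det A1) = cr s^5 * cr r^2 * cr x^3 * (cr r^2 * cr D)"
      using detA1 rD by (simp add: cr_def)
    have nz: "cr s \<noteq> 0" "cr r \<noteq> 0" using s_pos r_pos by (simp_all add: cr_def)
    have l0e: "z - l0 = u / cr x" using cx by (simp add: u_def l0_def cr_def field_simps)
    have "charpoly (B ** A2) z = (cr s^5 * cr r^2 * u^3 * (cr r^2 * Qp)) / (cr s^5 * cr r^2 * cr x^3 * (cr r^2 * cr D))"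
      unfolding cp1 detNz Qz dA u_def Qp_def by simp
    also have "\<dots> = (u / cr x)^3 * (Qp / cr D)"
      using nz cx cD by (simp add: field_simps)
    also have "\<dots> = (z - l0)^3 * ((z - lm) * (z - lp))"
      unfolding l0e quad Qp_def by simp
    finally show ?thesis by (simp add: mult.assoc)
  qed
  define Ab where "Ab = B ** A2"
  have eig: "eigenvalues Ab = {l0, lm, lp}"
    by (auto simp: eigenvalues_def cpf Ab_def)
  have cpneg: "charpoly ((-1::real) *\<^sub>R Ab) z = - charpoly Ab (-z)" for z
  proof -
    have "mat z - cmat ((-1::real) *\<^sub>R Ab) = - (mat (-z) - cmat Ab)"
      by (simp add: vec_eq_iff mat_def cmat_def)
    then show ?thesis unfolding charpoly_def by (simp only: det_neg5)
  qed
  have eigneg: "eigenvalues (- Ab) = {-l0, -lm, -lp}"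
  proof -
    have "z \<in> eigenvalues ((-1::real) *\<^sub>R Ab) \<longleftrightarrow> -z \<in> eigenvalues Ab" for z
      unfolding eigenvalues_def mem_Collect_eq cpneg by simp
    then have "z \<in> eigenvalues ((-1::real) *\<^sub>R Ab) \<longleftrightarrow> -z \<in> {l0, lm, lp}" for z
      unfolding eig .
    then have *: "z \<in> eigenvalues (- Ab) \<longleftrightarrow> -z \<in> {l0, lm, lp}" for z by simp
    show ?thesis
    proof (rule set_eqI)
      fix z
      have "(-z \<in> {l0, lm, lp}) = (z \<in> {-l0, -lm, -lp})" by auto
      then show "z \<in> eigenvalues (- Ab) \<longleftrightarrow> z \<in> {-l0, -lm, -lp}" using * by simp
    qed
  qed
  have w_cases: "w = 1 \<or> w = -1" if "\<bar>w\<bar> = (1::real)" for w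
    using that by linarith
  have allreal_iff: "(\<forall>w::real. \<bar>w\<bar> = 1 \<longrightarrow> all_real_eigenvalues (w *\<^sub>R Ab)) \<longleftrightarrow>
       Im l0 = 0 \<and> Im lm = 0 \<and> Im lp = 0"
  proof
    assume "\<forall>w::real. \<bar>w\<bar> = 1 \<longrightarrow> all_real_eigenvalues (w *\<^sub>R Ab)"
    then have "all_real_eigenvalues ((1::real) *\<^sub>R Ab)" by (metis abs_one)
    then show "Im l0 = 0 \<and> Im lm = 0 \<and> Im lp = 0" by (simp add: all_real_eigenvalues_def eig)
  next
    assume "Im l0 = 0 \<and> Im lm = 0 \<and> Im lp = 0"
    then show "\<forall>w::real. \<bar>w\<bar> = 1 \<longrightarrow> all_real_eigenvalues (w *\<^sub>R Ab)"
    proof (intro allI impI)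
      fix w :: real assume "\<bar>w\<bar> = 1"
      then have "w = 1 \<or> w = -1" by (rule w_cases)
      then show "all_real_eigenvalues (w *\<^sub>R Ab)"
      proof
        assume "w = 1" then show ?thesis using \<open>Im l0 = 0 \<and> Im lm = 0 \<and> Im lp = 0\<close>
          by (simp add: all_real_eigenvalues_def eig)
      next
        assume "w = -1" then show ?thesis using \<open>Im l0 = 0 \<and> Im lm = 0 \<and> Im lp = 0\<close>
          by (simp add: all_real_eigenvalues_def eigneg)
      qed
    qed
  qed
  have notdist: "\<not> distinct_eigenvalues ((1::real) *\<^sub>R Ab)"
  proof -
    have "card {l0, lm, lp} \<le> 3" by (simp add: card_insert_if)
    then show ?thesis by (auto simp: distinct_eigenvalues_def eig)
  qed
  have Iml0: "Im l0 = 0" by (simp add: l0_def cr_def)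
  have final: "(\<forall>z. charpoly Ab z = (z - l0)^3 * (z - lm) * (z - lp)) \<and> \<not> strictly_hyperbolic Ab
      \<and> (qc > c \<longrightarrow> nonstrictly_hyperbolic Ab) \<and> (qc < c \<longrightarrow> elliptic Ab)"
  proof (intro conjI impI allI)
    show "charpoly Ab z = (z - l0)^3 * (z - lm) * (z - lp)" for z using cpf Ab_def by simp
    show "\<not> strictly_hyperbolic Ab" using notdist unfolding strictly_hyperbolic_def
      by (metis abs_one)
  next
    assume "qc > c"
    then have "qc^2 > c^2" using c_pos by (simp add: power_strict_mono)
    then have t: "qc^2 - c^2 \<ge> 0" by simp
    have "Im lm = 0" "Im lp = 0"
      unfolding lm_def lp_def R_def cr_def using t by (simp_all add: csqrt_of_real)
    then show "nonstrictly_hyperbolic Ab" unfolding nonstrictly_hyperbolic_def allreal_iff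
      using Iml0 notdist by (metis abs_one)
  next
    assume "qc < c"
    moreover have "qc \<ge> 0" using q2_nn by (simp add: qc_def)
    ultimately have "qc^2 < c^2" by (simp add: power_strict_mono)
    then have t: "qc^2 - c^2 < 0" by simp
    have a_pos: "c / sqrt g > 0" using c_pos g_pos by simp
    have "Im lp = (c / sqrt g) * sqrt \<bar>qc^2 - c^2\<bar> / D"
      unfolding lp_def R_def cr_def using t by simp
    moreover have "sqrt \<bar>qc^2 - c^2\<bar> > 0" using t by simp
    ultimately have "Im lp \<noteq> 0" using a_pos D_nz c_pos g_pos by simp
    then have "\<not> all_real_eigenvalues ((1::real) *\<^sub>R Ab)" by (simp add: all_real_eigenvalues_def eig)
    then show "elliptic Ab" unfolding elliptic_def by (metis abs_one)
  qed
  have eqs: "U$1 = r" "U$2 = x" "U$3 = y" "U$5 = e" "det G = g" "P r e = p" "Pe r e = pe" "Pr r e = pr"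
    "matrix_inv G $ 1 $ 1 = h11" "matrix_inv G $ 1 $ 2 = h12" "sqrt (p * pe + r^2 * pr) / r = c"
    "sqrt (crossvel U \<bullet> (G *v crossvel U)) = qc" "matrix_inv (fluxjac G P 1 U) ** fluxjac G P 2 U = Ab"
    by (simp_all add: r_def x_def y_def e_def g_def p_def pe_def pr_def gi c_def K_def qc_def q2_def Ab_def B_def A1_def A2_def)
  show ?thesis
    unfolding Let_def eqs
    using final unfolding l0_def lm_def lp_def R_def b_def D_def cr_def by blast
qed


end
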